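(* Let $n\ge1$ and let $f,g_1$ be as defined in the context. The set $\{v\in\mathbb{R}^{n+1}: g_1(v)=0,\ \sum_i v_i=0,\ \sum_i v_i^2=1\}$ equals $\{v\in\mathbb{R}^{n+1}:\sigma_1(v)=0,\ \sigma_2(v)=-\tfrac12,\ \sigma_3(v)=0\}$, and on this set $f=\frac{9(n-1)}{8(n+1)}-\sigma_4$. Consequently, finding the critical points (local extrema) of the minimization problem $\min f$ subject to $g_1=0$, $\sum_i v_i=0$, $\sum_i v_i^2=1$ is equivalent to finding the critical points of the problem $\max\sigma_4$ subject to $\sigma_1=0$, $\sigma_2=-\frac12$, $\sigma_3=0$.
   Context: For $v=(v_1,\dots,v_{n+1})$, $\sigma_k$ denotes the $k$-th elementary symmetric polynomial in $v_1,\dots,v_{n+1}$ ($\sigma_k=0$ for $k>n+1$), and $P=\sum_j v_j^2$. Define $u_i(v)=\frac{2+P}{2(n+1)}-\frac{v_i^2}{2}$, $\tilde u_i(v)=\frac{3P}{2(n+1)}-\frac{v_i^2}{2}$, $f(v)=\sum_i u_i(v)^2-2u_{n+1}(v)+1-v_{n+1}^2$ and $g_1(v)=\sum_i\tilde u_i(v)v_i$. The minimization problem describes the squared radii of circumscribing cylinders of the regular simplex with vertices $e_1,\dots,e_{n+1}$ in the hyperplane $\sum x_i=1$ of $\mathbb{R}^{n+1}$, with axis direction $v$. *)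

theory Defs
  imports Complex_Main
begin

text \<open>Vectors v in R^(n+1) are represented as functions nat => real; only the
  coordinates v 1, ..., v (n+1) are relevant.\<close>

definition esym :: "nat \<Rightarrow> nat \<Rightarrow> (nat \<Rightarrow> real) \<Rightarrow> real" where
  "esym n k v = (\<Sum>S \<in> {S. S \<subseteq> {1..n+1} \<and> card S = k}. \<Prod>i\<in>S. v i)"

definition Psq :: "nat \<Rightarrow> (nat \<Rightarrow> real) \<Rightarrow> real" where
  "Psq n v = (\<Sum>j=1..n+1. (v j)^2)"

definition uu :: "nat \<Rightarrow> (nat \<Rightarrow> real) \<Rightarrow> nat \<Rightarrow> real" where
  "uu n v i = (2 + Psq n v) / (2 * (real n + 1)) - (v i)^2 / 2"

definition ut :: "nat \<Rightarrow> (nat \<Rightarrow> real) \<Rightarrow> nat \<Rightarrow> real" where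
  "ut n v i = 3 * Psq n v / (2 * (real n + 1)) - (v i)^2 / 2"

definition ff :: "nat \<Rightarrow> (nat \<Rightarrow> real) \<Rightarrow> real" where
  "ff n v = (\<Sum>i=1..n+1. (uu n v i)^2) - 2 * uu n v (n+1) + 1 - (v (n+1))^2"

definition g1 :: "nat \<Rightarrow> (nat \<Rightarrow> real) \<Rightarrow> real" where
  "g1 n v = (\<Sum>i=1..n+1. ut n v i * v i)"

definition loc_min_on :: "nat \<Rightarrow> ((nat \<Rightarrow> real) \<Rightarrow> real) \<Rightarrow> (nat \<Rightarrow> real) set \<Rightarrow> (nat \<Rightarrow> real) \<Rightarrow> bool" where
  "loc_min_on n F S v \<longleftrightarrow> v \<in> S \<and>
     (\<exists>e>0. \<forall>w\<in>S. (\<forall>i\<in>{1..n+1}. \<bar>w i - v i\<bar> < e) \<longrightarrow> F v \<le> F w)"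

definition loc_max_on :: "nat \<Rightarrow> ((nat \<Rightarrow> real) \<Rightarrow> real) \<Rightarrow> (nat \<Rightarrow> real) set \<Rightarrow> (nat \<Rightarrow> real) \<Rightarrow> bool" where
  "loc_max_on n F S v \<longleftrightarrow> v \<in> S \<and>
     (\<exists>e>0. \<forall>w\<in>S. (\<forall>i\<in>{1..n+1}. \<bar>w i - v i\<bar> < e) \<longrightarrow> F w \<le> F v)"

end

theory Submission
  imports Defs
begin

definition EE :: "nat set \<Rightarrow> nat \<Rightarrow> (nat \<Rightarrow> real) \<Rightarrow> real" where
  "EE A k v = (\<Sum>S\<in>Pow A. if card S = k then \<Prod>i\<in>S. v i else 0)"

definition pw :: "nat set \<Rightarrow> nat \<Rightarrow> (nat \<Rightarrow> real) \<Rightarrow> real" where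
  "pw A k v = (\<Sum>i\<in>A. v i ^ k)"

lemma EE_empty: "EE {} k v = (if k = 0 then 1 else 0)"
  by (simp add: EE_def)

lemma EE_insert:
  assumes "finite A" "a \<notin> A"
  shows "EE (insert a A) k v = EE A k v + (if k = 0 then 0 else v a * EE A (k - 1) v)"
proof -
  have inj: "inj_on (insert a) (Pow A)" using assms(2)
    by (smt (verit, best) PowD inj_onI insert_absorb insert_ident subset_iff)
  have disj: "Pow A \<inter> insert a ` Pow A = {}" using assms(2) by auto
  have "EE (insert a A) k v = EE A k v +
     (\<Sum>S\<in>insert a ` Pow A. if card S = k then \<Prod>i\<in>S. v i else 0)"
    unfolding EE_def Pow_insert using assms(1) disj by (simp add: sum.union_disjoint)
  also have "(\<Sum>S\<in>insert a ` Pow A. if card S = k then \<Prod>i\<in>S. v i else 0)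
      = (\<Sum>S\<in>Pow A. if card (insert a S) = k then \<Prod>i\<in>insert a S. v i else 0)"
    by (simp add: sum.reindex[OF inj])
  also have "\<dots> = (\<Sum>S\<in>Pow A. if k = 0 then 0 else v a * (if card S = k - 1 then \<Prod>i\<in>S. v i else 0))"
  proof (rule sum.cong)
    fix S assume "S \<in> Pow A"
    then have fS: "finite S" and aS: "a \<notin> S" using assms finite_subset by auto
    show "(if card (insert a S) = k then \<Prod>i\<in>insert a S. v i else 0) =
      (if k = 0 then 0 else v a * (if card S = k - 1 then \<Prod>i\<in>S. v i else 0))"
      using fS aS by auto
  qed simp
  also have "\<dots> = (if k = 0 then 0 else v a * EE A (k - 1) v)"
    by (simp add: EE_def sum_distrib_left)
  finally show ?thesis .
qed

lemma pw_insert: "finite A \<Longrightarrow> a \<notin> A \<Longrightarrow> pw (insert a A) k v = v a ^ k + pw A k v"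
  by (simp add: pw_def)

lemma newton:
  assumes "finite A"
  shows "EE A 0 v = 1 \<and> EE A 1 v = pw A 1 v \<and> 2 * EE A 2 v = pw A 1 v ^ 2 - pw A 2 v
    \<and> 6 * EE A 3 v = pw A 1 v ^ 3 - 3 * pw A 1 v * pw A 2 v + 2 * pw A 3 v
    \<and> 24 * EE A 4 v = pw A 1 v ^ 4 - 6 * pw A 1 v ^ 2 * pw A 2 v + 3 * pw A 2 v ^ 2
        + 8 * pw A 1 v * pw A 3 v - 6 * pw A 4 v"
  using assms
proof (induction A rule: finite_induct)
  case empty
  then show ?case by (simp add: EE_empty pw_def)
next
  case (insert a A)
  note IH = insert.IH
  have e: "\<And>k. EE (insert a A) k v = EE A k v + (if k = 0 then 0 else v a * EE A (k - 1) v)"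
    using EE_insert[OF insert.hyps] .
  have p: "\<And>k. pw (insert a A) k v = v a ^ k + pw A k v"
    using pw_insert[OF insert.hyps] .
  obtain E0 E1 E2 E3 E4 where
    h0: "EE A 0 v = 1" and h1: "EE A 1 v = pw A 1 v" and h2: "2 * EE A 2 v = pw A 1 v ^ 2 - pw A 2 v"
    and h3: "6 * EE A 3 v = pw A 1 v ^ 3 - 3 * pw A 1 v * pw A 2 v + 2 * pw A 3 v"
    and h4: "24 * EE A 4 v = pw A 1 v ^ 4 - 6 * pw A 1 v ^ 2 * pw A 2 v + 3 * pw A 2 v ^ 2
        + 8 * pw A 1 v * pw A 3 v - 6 * pw A 4 v" using IH by blast
  show ?case
    unfolding e p using h0 h1 h2 h3 h4 by simp algebra
qed

lemma esym_EE: "esym n k v = EE {1..n+1} k v"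
proof -
  have "EE {1..n+1} k v = (\<Sum>S\<in>{S\<in>Pow {1..n+1}. card S = k}. \<Prod>i\<in>S. v i)"
    unfolding EE_def by (rule sum.inter_filter[symmetric]) simp
  also have "{S\<in>Pow {1..n+1}. card S = k} = {S. S \<subseteq> {1..n+1} \<and> card S = k}" by auto
  finally show ?thesis by (simp add: esym_def)
qed

lemma arith_aux: "(N::real) > 0 \<Longrightarrow> N*(3/(2*N))^2 - 3/(2*N) + p/4 - 2*(3/(2*N) - w/2) + 1 - w = 9*(N-2)/(8*N) - (3-6*p)/24"
  by (simp add: field_simps power2_eq_square)

lemma g1_pw: "g1 n v = 3 * pw {1..n+1} 2 v / (2 * (real n + 1)) * pw {1..n+1} 1 v - pw {1..n+1} 3 v / 2"
proof -
  define a where "a = 3 * Psq n v / (2 * (real n + 1))"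
  have "g1 n v = (\<Sum>i=1..n+1. a * v i - v i ^ 3 / 2)"
    unfolding g1_def by (rule sum.cong) (simp_all add: ut_def a_def algebra_simps power3_eq_cube power2_eq_square)
  also have "\<dots> = a * pw {1..n+1} 1 v - pw {1..n+1} 3 v / 2"
    by (simp only: pw_def sum_subtractf sum_distrib_left sum_divide_distrib power_one_right)
  finally show ?thesis by (simp add: a_def Psq_def pw_def)
qed

lemma ff_pw:
  fixes n :: nat and v :: "nat \<Rightarrow> real"
  defines "c \<equiv> (2 + Psq n v) / (2 * (real n + 1))"
  shows "ff n v = (real n + 1) * c^2 - c * pw {1..n+1} 2 v + pw {1..n+1} 4 v / 4
     - 2 * (c - v (n+1)^2/2) + 1 - v (n+1)^2"
proof -
  have "(\<Sum>i=1..n+1. (uu n v i)^2) = (\<Sum>i=1..n+1. c^2 - c * v i ^ 2 + v i ^ 4 / 4)"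
    unfolding uu_def c_def[symmetric]
    by (rule sum.cong) (simp_all add: power2_eq_square power4_eq_xxxx algebra_simps)
  also have "\<dots> = (real n + 1) * c^2 - c * pw {1..n+1} 2 v + pw {1..n+1} 4 v / 4"
    by (simp only: pw_def sum.distrib sum_subtractf sum_distrib_left sum_divide_distrib sum_constant card_atLeastAtMost) simp
  finally show ?thesis unfolding ff_def by (simp add: uu_def c_def)
qed

lemma charac:
  fixes n :: nat
  shows "(g1 n v = 0 \<and> (\<Sum>i=1..n+1. v i) = 0 \<and> Psq n v = 1)
     \<longleftrightarrow> (esym n 1 v = 0 \<and> esym n 2 v = -1/2 \<and> esym n 3 v = 0)"
proof -
  define p1 p2 p3 where "p1 = pw {1..n+1} 1 v" "p2 = pw {1..n+1} 2 v" "p3 = pw {1..n+1} 3 v"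
  have N: "2 * (real n + 1) \<noteq> 0" by simp
  have s1: "(\<Sum>i=1..n+1. v i) = p1" by (simp add: p1_p2_p3_def pw_def)
  have P: "Psq n v = p2" by (simp add: p1_p2_p3_def pw_def Psq_def)
  have g: "g1 n v = 3 * p2 / (2 * (real n + 1)) * p1 - p3 / 2" by (simp add: g1_pw p1_p2_p3_def)
  have nw: "esym n 1 v = p1 \<and> 2 * esym n 2 v = p1 ^ 2 - p2 \<and> 6 * esym n 3 v = p1 ^ 3 - 3 * p1 * p2 + 2 * p3"
    using newton[of "{1..n+1}" v] by (simp add: esym_EE p1_p2_p3_def)
  show ?thesis unfolding s1 P g using nw by auto
qed

lemma fvalue:
  fixes n :: nat
  assumes "esym n 1 v = 0" "esym n 2 v = -1/2" "esym n 3 v = 0"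
  shows "ff n v = 9 * (real n - 1) / (8 * (real n + 1)) - esym n 4 v"
proof -
  define p1 p2 p3 p4 where "p1 = pw {1..n+1} 1 v" "p2 = pw {1..n+1} 2 v" "p3 = pw {1..n+1} 3 v"
    "p4 = pw {1..n+1} 4 v"
  have P: "Psq n v = p2" by (simp add: p1_p2_p3_p4_def pw_def Psq_def)
  have nw: "esym n 1 v = p1 \<and> 2 * esym n 2 v = p1 ^ 2 - p2 \<and> 6 * esym n 3 v = p1 ^ 3 - 3 * p1 * p2 + 2 * p3
    \<and> 24 * esym n 4 v = p1 ^ 4 - 6 * p1 ^ 2 * p2 + 3 * p2 ^ 2 + 8 * p1 * p3 - 6 * p4"
    using newton[of "{1..n+1}" v] by (simp add: esym_EE p1_p2_p3_p4_def)
  have "p1 = 0" "p2 = 1" "p3 = 0" using nw assms by auto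
  then have e4: "esym n 4 v = (3 - 6 * p4) / 24" using nw by simp
  have X: "ff n v = (real n + 1) * (3 / (2 * (real n + 1)))^2 - (3 / (2 * (real n + 1))) + p4 / 4
     - 2 * ((3 / (2 * (real n + 1))) - v (n+1)^2/2) + 1 - v (n+1)^2"
    using ff_pw[of n v] P \<open>p2 = 1\<close> by (simp add: p1_p2_p3_p4_def)
  have Y: "(real n + 1) * (3 / (2 * (real n + 1)))^2 - (3 / (2 * (real n + 1))) + p4 / 4
     - 2 * ((3 / (2 * (real n + 1))) - v (n+1)^2/2) + 1 - v (n+1)^2
     = 9 * (real n - 1) / (8 * (real n + 1)) - (3 - 6 * p4) / 24"
  proof -
    have h: "real n + 1 - 2 = real n - 1" by simp
    have "0 < real n + 1" by simp
    from arith_aux[OF this, of p4 "v (n+1)^2"] show ?thesis by (simp only: h)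
  qed
  show ?thesis unfolding e4 X Y ..
qed

theorem mainTheorem9:
  fixes n :: nat
  assumes "n \<ge> 1"
  shows "{v. g1 n v = 0 \<and> (\<Sum>i=1..n+1. v i) = 0 \<and> Psq n v = 1}
           = {v. esym n 1 v = 0 \<and> esym n 2 v = -1/2 \<and> esym n 3 v = 0}
       \<and> (\<forall>v. esym n 1 v = 0 \<and> esym n 2 v = -1/2 \<and> esym n 3 v = 0 \<longrightarrow>
              ff n v = 9 * (real n - 1) / (8 * (real n + 1)) - esym n 4 v)
       \<and> (\<forall>v. loc_min_on n (ff n) {v. g1 n v = 0 \<and> (\<Sum>i=1..n+1. v i) = 0 \<and> Psq n v = 1} v
              \<longleftrightarrow> loc_max_on n (esym n 4) {v. esym n 1 v = 0 \<and> esym n 2 v = -1/2 \<and> esym n 3 v = 0} v)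
       \<and> (\<forall>v. loc_max_on n (ff n) {v. g1 n v = 0 \<and> (\<Sum>i=1..n+1. v i) = 0 \<and> Psq n v = 1} v
              \<longleftrightarrow> loc_min_on n (esym n 4) {v. esym n 1 v = 0 \<and> esym n 2 v = -1/2 \<and> esym n 3 v = 0} v)"
proof -
  define S where "S = {v. esym n 1 v = 0 \<and> esym n 2 v = -1/2 \<and> esym n 3 v = 0}"
  have eq: "{v. g1 n v = 0 \<and> (\<Sum>i=1..n+1. v i) = 0 \<and> Psq n v = 1} = S"
    unfolding S_def using charac by blast
  have fv: "\<And>v. v \<in> S \<Longrightarrow> ff n v = 9 * (real n - 1) / (8 * (real n + 1)) - esym n 4 v"
    unfolding S_def using fvalue by blast
  have a: "loc_min_on n (ff n) S v \<longleftrightarrow> loc_max_on n (esym n 4) S v" for v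
    unfolding loc_min_on_def loc_max_on_def
  proof (intro iffI conjI; elim conjE exE)
    fix e assume "v \<in> S" "e > 0" and H: "\<forall>w\<in>S. (\<forall>i\<in>{1..n+1}. \<bar>w i - v i\<bar> < e) \<longrightarrow> ff n v \<le> ff n w"
    then show "\<exists>e>0. \<forall>w\<in>S. (\<forall>i\<in>{1..n+1}. \<bar>w i - v i\<bar> < e) \<longrightarrow> esym n 4 w \<le> esym n 4 v"
      using fv by force
  next
    fix e assume "v \<in> S" "e > 0" and H: "\<forall>w\<in>S. (\<forall>i\<in>{1..n+1}. \<bar>w i - v i\<bar> < e) \<longrightarrow> esym n 4 w \<le> esym n 4 v"
    then show "\<exists>e>0. \<forall>w\<in>S. (\<forall>i\<in>{1..n+1}. \<bar>w i - v i\<bar> < e) \<longrightarrow> ff n v \<le> ff n w"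
      using fv by force
  qed
  have b: "loc_max_on n (ff n) S v \<longleftrightarrow> loc_min_on n (esym n 4) S v" for v
    unfolding loc_min_on_def loc_max_on_def
  proof (intro iffI conjI; elim conjE exE)
    fix e assume "v \<in> S" "e > 0" and H: "\<forall>w\<in>S. (\<forall>i\<in>{1..n+1}. \<bar>w i - v i\<bar> < e) \<longrightarrow> ff n w \<le> ff n v"
    then show "\<exists>e>0. \<forall>w\<in>S. (\<forall>i\<in>{1..n+1}. \<bar>w i - v i\<bar> < e) \<longrightarrow> esym n 4 v \<le> esym n 4 w"
      using fv by force
  next
    fix e assume "v \<in> S" "e > 0" and H: "\<forall>w\<in>S. (\<forall>i\<in>{1..n+1}. \<bar>w i - v i\<bar> < e) \<longrightarrow> esym n 4 v \<le> esym n 4 w"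
    then show "\<exists>e>0. \<forall>w\<in>S. (\<forall>i\<in>{1..n+1}. \<bar>w i - v i\<bar> < e) \<longrightarrow> ff n w \<le> ff n v"
      using fv by force
  qed
  show ?thesis unfolding eq using a b fv unfolding S_def by blast
qed

end
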